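(* Let $N\ge0$ be an integer, take $\tau_1=1$, $\tau_2=-1$, $\tau_3=-2N-2-\alpha-\beta$ and $\tau_0$ arbitrary, so that $M=XL-LX+\tau_3X+\tau_0=2x(x-1)\partial_x+(\alpha+\beta+\tau_3+2)x+\tau_0-\alpha-1$. Then $L$ and $M$ preserve the space of polynomials of degree $\le N$; the polynomials $\psi_n(x)=x^n(1-x)^{N-n}$, $n=0,\dots,N$, satisfy $M\psi_n=(\tau_0-2n-\alpha-1)\psi_n$; and $$L\psi_n=(N-n)(N-n+\beta)\psi_{n+1}+\big(2n^2+(\alpha-\beta-2N)n-(\alpha+1)N\big)\psi_n+n(n+\alpha)\psi_{n-1},$$ with $\psi_{-1}:=0$, $\psi_{N+1}:=0$.
   Context: $L=x(1-x)\partial_x^2+\big(\alpha+1-(\alpha+\beta+2)x\big)\partial_x$ with real $\alpha,\beta>-1$, and $X$ is multiplication by $x$. *)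

theory Defs
  imports "HOL-Computational_Algebra.Polynomial"
begin

definition Lop :: "real \<Rightarrow> real \<Rightarrow> real poly \<Rightarrow> real poly" where
  "Lop a b p = [:0, 1, -1:] * pderiv (pderiv p) + [:a + 1, -(a + b + 2):] * pderiv p"

definition Mop :: "real \<Rightarrow> real \<Rightarrow> real \<Rightarrow> real \<Rightarrow> real \<Rightarrow> real \<Rightarrow> real poly \<Rightarrow> real poly" where
  "Mop a b t1 t2 t3 t0 p =
     smult t1 ([:0, 1:] * Lop a b p) + smult t2 (Lop a b ([:0, 1:] * p))
     + smult t3 ([:0, 1:] * p) + smult t0 p"

definition psi :: "nat \<Rightarrow> nat \<Rightarrow> real poly" where
  "psi N n = [:0, 1:] ^ n * [:1, -1:] ^ (N - n)"

end

theory Submission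
  imports Defs
begin
abbreviation "XX \<equiv> [:0,1::real:]"
abbreviation "YY \<equiv> [:1,-1::real:]"
lemma pX: "pderiv XX = 1" by (simp add: pderiv_pCons)
lemma pY: "pderiv YY = [:-1:]" by (simp add: pderiv_pCons)
lemma dX: "pderiv (XX^Suc k) = smult (real (Suc k)) (XX^k)"
  by (simp only: pderiv_power pX) simp
lemma dY: "pderiv (YY^Suc k) = - smult (real (Suc k)) (YY^k)"
  by (simp only: pderiv_power pY diff_Suc_1) (simp flip: smult_smult)
lemma L1: "XX * pderiv (XX^n) = smult (real n) (XX^n)"
  by (cases n) (simp_all only: dX, auto simp del: power_Suc simp: power_Suc[symmetric])
lemma L3: "YY * pderiv (YY^n) = - smult (real n) (YY^n)"
  by (cases n) (simp_all only: dY, auto simp del: power_Suc simp: power_Suc[symmetric])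
lemma L2: "XX^2 * pderiv (pderiv (XX^n)) = smult (real n * (real n - 1)) (XX^n)"
proof (cases n)
  case (Suc k) then show ?thesis
  proof (cases k)
    case (Suc m)
    have "XX^2 * pderiv (pderiv (XX^n)) = smult (real n * (real n - 1)) (XX^2 * XX^m)"
      using Suc \<open>n = Suc k\<close> by (simp only: dX pderiv_smult) (simp add: algebra_simps)
    also have "XX^2 * XX^m = XX^n" using Suc \<open>n = Suc k\<close> by (simp add: power_add[symmetric])
    finally show ?thesis .
  qed (simp add: dX pderiv_pCons)
qed auto
lemma L4: "YY^2 * pderiv (pderiv (YY^n)) = smult (real n * (real n - 1)) (YY^n)"
proof (cases n)
  case (Suc k) then show ?thesis
  proof (cases k)
    case (Suc m)
    have "YY^2 * pderiv (pderiv (YY^n)) = smult (real n * (real n - 1)) (YY^2 * YY^m)"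
      using Suc \<open>n = Suc k\<close> by (simp only: dY pderiv_smult pderiv_minus) (simp add: algebra_simps)
    also have "YY^2 * YY^m = YY^n" using Suc \<open>n = Suc k\<close> by (simp add: power_add[symmetric])
    finally show ?thesis .
  qed (simp add: dY pderiv_pCons)
qed auto

lemma P1: "Mop a b 1 (-1) t3 t0 p = [:0, -2, 2:] * pderiv p + [:t0 - a - 1, a + b + t3 + 2:] * p"
proof -
  have d1: "pderiv ([:0,1:] * p) = p + [:0,1:] * pderiv p"
    by (simp add: pderiv_mult pderiv_pCons)
  have d2: "pderiv (pderiv ([:0,1:] * p)) = 2 * pderiv p + [:0,1:] * pderiv (pderiv p)"
    unfolding d1 by (simp add: pderiv_add pderiv_mult pderiv_pCons)
  show ?thesis
    unfolding Mop_def Lop_def unfolding d2 unfolding d1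
    by (rule iffD1[OF poly_eq_poly_eq_iff], rule ext) (simp add: algebra_simps)
qed

lemma P2L: "degree p \<le> N \<Longrightarrow> degree (Lop a b p) \<le> N"
  unfolding Lop_def
  apply (rule degree_le)
  apply (auto simp: coeff_pCons coeff_pderiv coeff_eq_0 split: nat.split)
  done

lemma P2M: "degree p \<le> N \<Longrightarrow> degree ([:0, -2, 2:] * pderiv p + [:t0 - a - 1, a + b + (- 2 * real N - 2 - a - b) + 2:] * p) \<le> N"
  apply (rule degree_le)
  apply (auto simp: coeff_pCons coeff_pderiv coeff_eq_0 split: nat.split)
  done

lemma D1: "XX*YY*pderiv(XX^n*YY^j) = smult (real n) (XX^n*YY^j*YY) - smult (real j) (XX^n*YY^j*XX)"
proof -
  have "XX*YY*pderiv(XX^n*YY^j) = (XX * pderiv (XX^n))*YY^j*YY + (YY * pderiv (YY^j))*XX^n*XX"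
    by (simp add: pderiv_mult algebra_simps)
  also have "... = smult (real n) (XX^n*YY^j*YY) - smult (real j) (XX^n*YY^j*XX)"
    unfolding L1 L3 by (simp add: algebra_simps)
  finally show ?thesis .
qed

lemma D2: "XX^2*YY^2*pderiv(pderiv(XX^n*YY^j)) = smult (real n * (real n - 1)) (XX^n*YY^j*YY^2)
   - smult (2 * real n * real j) (XX^n*YY^j*XX*YY) + smult (real j * (real j - 1)) (XX^n*YY^j*XX^2)"
proof -
  have "XX^2*YY^2*pderiv(pderiv(XX^n*YY^j)) = (XX^2 * pderiv (pderiv (XX^n)))*YY^j*YY^2
     + smult 2 ((XX * pderiv (XX^n)) * (YY * pderiv (YY^j)) * XX * YY) + (YY^2 * pderiv (pderiv (YY^j)))*XX^n*XX^2"
    unfolding pderiv_mult pderiv_add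
    by (rule iffD1[OF poly_eq_poly_eq_iff], rule ext) (simp add: algebra_simps power2_eq_square)
  also have "... = smult (real n * (real n - 1)) (XX^n*YY^j*YY^2)
   - smult (2 * real n * real j) (XX^n*YY^j*XX*YY) + smult (real j * (real j - 1)) (XX^n*YY^j*XX^2)"
    unfolding L1 L2 L3 L4 by (simp add: algebra_simps)
  finally show ?thesis .
qed

lemma two: "2 * p = smult 2 (p::real poly)"
  by (rule iffD1[OF poly_eq_poly_eq_iff], rule ext) simp

lemma XYnz: "XX*YY \<noteq> 0" by simp

lemma MM: "[:0, -2, 2:] * pderiv (XX^n*YY^j) + [:t0 - a - 1, a + b + (- 2 * real (n+j) - 2 - a - b) + 2:] * (XX^n*YY^j)
   = smult (t0 - 2 * real n - a - 1) (XX^n*YY^j)"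
proof -
  have e: "[:0, -2, 2:] = smult (-2) (XX*YY)" by simp
  have "[:0, -2, 2:] * pderiv (XX^n*YY^j) = smult (-2) (XX*YY*pderiv(XX^n*YY^j))"
    unfolding e by (rule iffD1[OF poly_eq_poly_eq_iff], rule ext) (simp add: algebra_simps)
  also have "... = smult (-2) (smult (real n) (XX^n*YY^j*YY) - smult (real j) (XX^n*YY^j*XX))"
    unfolding D1 ..
  finally have h: "[:0, -2, 2:] * pderiv (XX^n*YY^j) = smult (-2) (smult (real n) (XX^n*YY^j*YY) - smult (real j) (XX^n*YY^j*XX))" .
  show ?thesis unfolding h
    by (rule iffD1[OF poly_eq_poly_eq_iff], rule ext) (simp add: algebra_simps)
qed

lemma LL: "Lop a b (XX^n*YY^j) = (if 0<j then smult ((real j)*(real j + b)) (XX^(n+1)*YY^(j-1)) else 0)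
   + smult (2 * (real n)^2 + (a - b - 2 * real (n+j)) * real n - (a + 1) * real (n+j)) (XX^n*YY^j)
   + (if 0<n then smult (real n * (real n + a)) (XX^(n-1)*YY^(j+1)) else 0)" (is "?L = ?A + ?B + ?C")
proof -
  have e: "[:0, 1, -1:] = XX*YY" by simp
  have "XX*YY*?L = XX^2*YY^2*pderiv(pderiv(XX^n*YY^j)) + [:a + 1, -(a + b + 2):] * (XX*YY*pderiv (XX^n*YY^j))"
    unfolding Lop_def e by (rule iffD1[OF poly_eq_poly_eq_iff], rule ext) (simp add: algebra_simps power2_eq_square)
  also have "... = smult (real n * (real n - 1)) (XX^n*YY^j*YY^2)
   - smult (2 * real n * real j) (XX^n*YY^j*XX*YY) + smult (real j * (real j - 1)) (XX^n*YY^j*XX^2)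
   + [:a + 1, -(a + b + 2):] * (smult (real n) (XX^n*YY^j*YY) - smult (real j) (XX^n*YY^j*XX))"
    unfolding D1 D2 ..
  finally have h1: "XX*YY*?L = smult (real n * (real n - 1)) (XX^n*YY^j*YY^2)
   - smult (2 * real n * real j) (XX^n*YY^j*XX*YY) + smult (real j * (real j - 1)) (XX^n*YY^j*XX^2)
   + [:a + 1, -(a + b + 2):] * (smult (real n) (XX^n*YY^j*YY) - smult (real j) (XX^n*YY^j*XX))" .
  have hA: "XX*YY*?A = smult ((real j)*(real j + b)) (XX^n*YY^j*XX^2)"
    by (cases j) (simp_all add: algebra_simps power2_eq_square)
  have hC: "XX*YY*?C = smult (real n * (real n + a)) (XX^n*YY^j*YY^2)"
    by (cases n) (simp_all add: algebra_simps power2_eq_square two)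
  have dd: "XX*YY*(?A + ?B + ?C) = XX*YY*?A + XX*YY*?B + XX*YY*?C" by (simp only: distrib_left)
  have "XX*YY*?L = XX*YY*(?A + ?B + ?C)"
    unfolding h1 dd hA hC
    by (rule iffD1[OF poly_eq_poly_eq_iff], rule ext) (simp add: algebra_simps power2_eq_square)
  then show ?thesis using XYnz mult_left_cancel by blast
qed

theorem mainTheorem9:
  fixes a b t0 :: real and N :: nat
  assumes "a > -1" and "b > -1"
  defines "t3 \<equiv> - 2 * real N - 2 - a - b"
  shows "(\<forall>p. Mop a b 1 (-1) t3 t0 p
              = [:0, -2, 2:] * pderiv p + [:t0 - a - 1, a + b + t3 + 2:] * p)
       \<and> (\<forall>p. degree p \<le> N \<longrightarrow> degree (Lop a b p) \<le> N \<and> degree (Mop a b 1 (-1) t3 t0 p) \<le> N)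
       \<and> (\<forall>n\<le>N. Mop a b 1 (-1) t3 t0 (psi N n) = smult (t0 - 2 * real n - a - 1) (psi N n))
       \<and> (\<forall>n\<le>N. Lop a b (psi N n) =
             (if n < N then smult ((real N - real n) * (real N - real n + b)) (psi N (n + 1)) else 0)
           + smult (2 * (real n)^2 + (a - b - 2 * real N) * real n - (a + 1) * real N) (psi N n)
           + (if 0 < n then smult (real n * (real n + a)) (psi N (n - 1)) else 0))"
proof (intro conjI allI impI)
  fix p show "Mop a b 1 (-1) t3 t0 p = [:0, -2, 2:] * pderiv p + [:t0 - a - 1, a + b + t3 + 2:] * p"
    by (rule P1)
next
  fix p :: "real poly" assume d: "degree p \<le> N"
  show "degree (Lop a b p) \<le> N" using d by (rule P2L)
  show "degree (Mop a b 1 (-1) t3 t0 p) \<le> N" unfolding P1 t3_def using d by (rule P2M)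
next
  fix n assume n: "n \<le> N"
  define j where "j = N - n"
  have N: "N = n + j" using n j_def by simp
  show "Mop a b 1 (-1) t3 t0 (psi N n) = smult (t0 - 2 * real n - a - 1) (psi N n)"
    unfolding P1 t3_def psi_def N using MM[of n j t0 a b] by simp
next
  fix n assume n: "n \<le> N"
  define j where "j = N - n"
  have N: "N = n + j" using n j_def by simp
  have e1: "real N - real n = real j" using N by simp
  have e2: "N - (n+1) = j - 1" "N - (n - 1) = (if 0 < n then j + 1 else j)" using N by auto
  show "Lop a b (psi N n) =
             (if n < N then smult ((real N - real n) * (real N - real n + b)) (psi N (n + 1)) else 0)
           + smult (2 * (real n)^2 + (a - b - 2 * real N) * real n - (a + 1) * real N) (psi N n)
           + (if 0 < n then smult (real n * (real n + a)) (psi N (n - 1)) else 0)"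
    unfolding e1 psi_def e2 using LL[of a b n j] N by (simp del: of_nat_add)
qed
end
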